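(* Let $\Sigma=(\sigma_1,\dots,\sigma_k)$ be a uniformly primitive mixed substitution system on a finite set of prototiles $\mathcal{F}$ in $\mathbb{R}^d$. Then $\mathbb{Y}_{\Sigma,\Omega}=\mathbb{Y}_{\Sigma,w}$ for every $w\in\widetilde\Omega$.
   Context: Tiles are compact sets equal to the closure of their interior; patches are tessellations of bounded sets by tiles with pairwise disjoint interiors, tilings are tessellations of $\mathbb{R}^d$. $\mathcal{F}=\{T_1,\dots,T_n\}$ is a finite set of prototiles, a tile of type $i$ is a translate of $T_i$, and $\mathcal{F}^*$ is the set of patches of translates of prototiles up to translation. A substitution rule with inflation factor $\xi>1$ is a map $\sigma:\mathcal{F}\to\mathcal{F}^*$ with $\operatorname{supp}\sigma(T_i)=\xi T_i$, extended to patches tile by tile ($T_i+t\mapsto\sigma(T_i)+\xi t$); it is primitive if some power of its substitution matrix (entries $a_{ij}=$ number of tiles of type $i$ in $\sigma(T_j)$) is strictly positive. A mixed substitution system is a tuple $\Sigma=(\sigma_1,\dots,\sigma_k)$ of primitive substitution rules on $\mathcal{F}$. Let $\mathcal{A}=\{1,\dots,k\}$, $\Omega=\mathcal{A}^{\mathbb{N}}$, and $w(m)=(w_1,\dots,w_m)$ for $w\in\Omega$. For a finite word $a=(a_1,\dots,a_m)$ define the left action $a.P=\sigma_{a_1}(\sigma_{a_2}(\cdots\sigma_{a_m}(P)\cdots))$ and the right action $P.a=\sigma_{a_m}(\sigma_{a_{m-1}}(\cdots\sigma_{a_1}(P)\cdots))$. $\Sigma$ is uniformly primitive if there is $m_0$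 such that for every $a\in\mathcal{A}^{m_0}$ and every $T\in\mathcal{F}$ the patch $a.T$ contains tiles of all types. For $w\in\Omega$ let $\mathcal{R}_w=\{T.w(m):T\in\mathcal{F},m\in\mathbb{N}\}$, and let $\mathbb{Y}_{\Sigma,w}$ be the set of tilings $\mathcal{T}$ of $\mathbb{R}^d$ such that every finite patch of $\mathcal{T}$ is a translate of a sub-patch of some element of $\mathcal{R}_w$; $\mathbb{Y}_{\Sigma,\Omega}=\bigcup_{w\in\Omega}\mathbb{Y}_{\Sigma,w}$. $\widetilde\Omega\subset\Omega$ is the set of infinite words containing every finite word over $\mathcal{A}$ as a block of consecutive letters. *)

theory Defs
  imports "HOL-Analysis.Analysis"
begin

text \<open>Prototiles are indexed by types 0..<n via F :: nat => 'a set.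
  A (labelled) tile of type i is represented by a pair (i, t), standing for the translate t + F i.
  A mixed substitution system of k rules is given by sigma :: nat => nat => (nat * 'a) set
  (sigma j i is the patch sigma_j(T_i)) and inflation factors xi :: nat => real;
  rule letters are 0..<k.\<close>

definition tile :: "'a::euclidean_space set \<Rightarrow> bool" where
  "tile T \<longleftrightarrow> compact T \<and> closure (interior T) = T"

definition geom :: "(nat \<Rightarrow> 'a::euclidean_space set) \<Rightarrow> nat \<times> 'a \<Rightarrow> 'a set" where
  "geom F x = (\<lambda>y. snd x + y) ` F (fst x)"

definition supp :: "(nat \<Rightarrow> 'a::euclidean_space set) \<Rightarrow> (nat \<times> 'a) set \<Rightarrow> 'a set" where
  "supp F P = \<Union> (geom F ` P)"

definition disjoint_interiors :: "(nat \<Rightarrow> 'a::euclidean_space set) \<Rightarrow> (nat \<times> 'a) set \<Rightarrow> bool" where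
  "disjoint_interiors F P \<longleftrightarrow>
     (\<forall>x\<in>P. \<forall>y\<in>P. x \<noteq> y \<longrightarrow> interior (geom F x) \<inter> interior (geom F y) = {})"

definition is_patch :: "(nat \<Rightarrow> 'a::euclidean_space set) \<Rightarrow> nat \<Rightarrow> (nat \<times> 'a) set \<Rightarrow> bool" where
  "is_patch F n P \<longleftrightarrow> finite P \<and> (\<forall>x\<in>P. fst x < n) \<and> disjoint_interiors F P"

definition is_tiling :: "(nat \<Rightarrow> 'a::euclidean_space set) \<Rightarrow> nat \<Rightarrow> (nat \<times> 'a) set \<Rightarrow> bool" where
  "is_tiling F n \<T> \<longleftrightarrow> (\<forall>x\<in>\<T>. fst x < n) \<and> disjoint_interiors F \<T> \<and> supp F \<T> = UNIV"

definition subst :: "(nat \<Rightarrow> (nat \<times> 'a::euclidean_space) set) \<Rightarrow> real \<Rightarrow> (nat \<times> 'a) set \<Rightarrow> (nat \<times> 'a) set" where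
  "subst s xi P = {(l, xi *\<^sub>R t + u) | i t l u. (i, t) \<in> P \<and> (l, u) \<in> s i}"

definition subst_rule :: "(nat \<Rightarrow> 'a::euclidean_space set) \<Rightarrow> nat \<Rightarrow> (nat \<Rightarrow> (nat \<times> 'a) set) \<Rightarrow> real \<Rightarrow> bool" where
  "subst_rule F n s xi \<longleftrightarrow> xi > 1 \<and>
     (\<forall>i<n. is_patch F n (s i) \<and> supp F (s i) = (\<lambda>x. xi *\<^sub>R x) ` F i)"

definition subst_matrix :: "(nat \<Rightarrow> (nat \<times> 'a) set) \<Rightarrow> nat \<Rightarrow> nat \<Rightarrow> nat" where
  "subst_matrix s i j = card {t. (i, t) \<in> s j}"

fun mpow :: "nat \<Rightarrow> (nat \<Rightarrow> nat \<Rightarrow> nat) \<Rightarrow> nat \<Rightarrow> nat \<Rightarrow> nat \<Rightarrow> nat" where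
  "mpow n M 0 = (\<lambda>i j. if i = j then 1 else 0)"
| "mpow n M (Suc m) = (\<lambda>i j. \<Sum>l<n. mpow n M m i l * M l j)"

definition primitive :: "nat \<Rightarrow> (nat \<Rightarrow> (nat \<times> 'a) set) \<Rightarrow> bool" where
  "primitive n s \<longleftrightarrow> (\<exists>m\<ge>1. \<forall>i<n. \<forall>j<n. mpow n (subst_matrix s) m i j > 0)"

definition mixed_subst_system ::
  "(nat \<Rightarrow> 'a::euclidean_space set) \<Rightarrow> nat \<Rightarrow> nat \<Rightarrow> (nat \<Rightarrow> nat \<Rightarrow> (nat \<times> 'a) set) \<Rightarrow> (nat \<Rightarrow> real) \<Rightarrow> bool" where
  "mixed_subst_system F n k \<sigma> \<xi> \<longleftrightarrow> (\<forall>i<n. tile (F i)) \<and>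
     (\<forall>j<k. subst_rule F n (\<sigma> j) (\<xi> j) \<and> primitive n (\<sigma> j))"

text \<open>Left action a.P = sigma_{a1}(sigma_{a2}(... sigma_{am}(P))).\<close>
definition left_act :: "(nat \<Rightarrow> nat \<Rightarrow> (nat \<times> 'a::euclidean_space) set) \<Rightarrow> (nat \<Rightarrow> real) \<Rightarrow> nat list \<Rightarrow> (nat \<times> 'a) set \<Rightarrow> (nat \<times> 'a) set" where
  "left_act \<sigma> \<xi> a P = foldr (\<lambda>j Q. subst (\<sigma> j) (\<xi> j) Q) a P"

text \<open>Right action P.a = sigma_{am}(... sigma_{a1}(P)).\<close>
definition right_act :: "(nat \<Rightarrow> nat \<Rightarrow> (nat \<times> 'a::euclidean_space) set) \<Rightarrow> (nat \<Rightarrow> real) \<Rightarrow> (nat \<times> 'a) set \<Rightarrow> nat list \<Rightarrow> (nat \<times> 'a) set" where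
  "right_act \<sigma> \<xi> P a = left_act \<sigma> \<xi> (rev a) P"

definition uniformly_primitive ::
  "nat \<Rightarrow> nat \<Rightarrow> (nat \<Rightarrow> nat \<Rightarrow> (nat \<times> 'a::euclidean_space) set) \<Rightarrow> (nat \<Rightarrow> real) \<Rightarrow> bool" where
  "uniformly_primitive n k \<sigma> \<xi> \<longleftrightarrow> (\<exists>m0. \<forall>a. set a \<subseteq> {..<k} \<and> length a = m0 \<longrightarrow>
     (\<forall>i<n. \<forall>j<n. \<exists>t. (j, t) \<in> left_act \<sigma> \<xi> a {(i, 0)}))"

text \<open>Infinite words over the alphabet {0..<k}; w 0 is the first letter.\<close>
definition Omega :: "nat \<Rightarrow> (nat \<Rightarrow> nat) set" where
  "Omega k = {w. \<forall>m. w m < k}"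

definition Omega_tilde :: "nat \<Rightarrow> (nat \<Rightarrow> nat) set" where
  "Omega_tilde k = {w \<in> Omega k. \<forall>a. set a \<subseteq> {..<k} \<longrightarrow> (\<exists>p. \<forall>l<length a. w (p + l) = a ! l)}"

text \<open>w(m) = (w_1, ..., w_m).\<close>
definition prefix_word :: "(nat \<Rightarrow> nat) \<Rightarrow> nat \<Rightarrow> nat list" where
  "prefix_word w m = map w [0..<m]"

definition R_w :: "nat \<Rightarrow> (nat \<Rightarrow> nat \<Rightarrow> (nat \<times> 'a::euclidean_space) set) \<Rightarrow> (nat \<Rightarrow> real) \<Rightarrow> (nat \<Rightarrow> nat) \<Rightarrow> (nat \<times> 'a) set set" where
  "R_w n \<sigma> \<xi> w = {right_act \<sigma> \<xi> {(i, 0)} (prefix_word w m) | i m. i < n}"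

definition translate :: "'a::euclidean_space \<Rightarrow> (nat \<times> 'a) set \<Rightarrow> (nat \<times> 'a) set" where
  "translate v P = (\<lambda>(i, t). (i, t + v)) ` P"

definition Y_w ::
  "(nat \<Rightarrow> 'a::euclidean_space set) \<Rightarrow> nat \<Rightarrow> (nat \<Rightarrow> nat \<Rightarrow> (nat \<times> 'a) set) \<Rightarrow> (nat \<Rightarrow> real) \<Rightarrow> (nat \<Rightarrow> nat) \<Rightarrow> (nat \<times> 'a) set set" where
  "Y_w F n \<sigma> \<xi> w = {\<T>. is_tiling F n \<T> \<and>
     (\<forall>P. finite P \<and> P \<subseteq> \<T> \<longrightarrow> (\<exists>R\<in>R_w n \<sigma> \<xi> w. \<exists>Q v. Q \<subseteq> R \<and> P = translate v Q))}"

definition Y_Omega ::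
  "(nat \<Rightarrow> 'a::euclidean_space set) \<Rightarrow> nat \<Rightarrow> nat \<Rightarrow> (nat \<Rightarrow> nat \<Rightarrow> (nat \<times> 'a) set) \<Rightarrow> (nat \<Rightarrow> real) \<Rightarrow> (nat \<times> 'a) set set" where
  "Y_Omega F n k \<sigma> \<xi> = (\<Union>w\<in>Omega k. Y_w F n \<sigma> \<xi> w)"

end

theory Submission
  imports Defs
begin

lemma subst_mono: "P \<subseteq> P' \<Longrightarrow> subst s xi P \<subseteq> subst s xi P'"
  unfolding subst_def by blast

lemma left_act_mono: "P \<subseteq> P' \<Longrightarrow> left_act \<sigma> \<xi> a P \<subseteq> left_act \<sigma> \<xi> a P'"
proof (induction a)
  case Nil then show ?case by (simp add: left_act_def)
next
  case (Cons j a)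
  then show ?case unfolding left_act_def foldr_Cons o_apply by (intro subst_mono) simp
qed

lemma subst_translate:
  "subst s xi (translate v P) = translate (xi *\<^sub>R v) (subst s xi P)"
proof
  show "subst s xi (translate v P) \<subseteq> translate (xi *\<^sub>R v) (subst s xi P)"
  proof
    fix x assume "x \<in> subst s xi (translate v P)"
    then obtain i t l u where x: "x = (l, xi *\<^sub>R t + u)" "(i, t) \<in> translate v P" "(l, u) \<in> s i"
      unfolding subst_def by blast
    then obtain t0 where "(i, t0) \<in> P" "t = t0 + v" unfolding translate_def by auto
    then have "(l, xi *\<^sub>R t0 + u) \<in> subst s xi P" using x unfolding subst_def by blast
    moreover have "x = (l, (xi *\<^sub>R t0 + u) + xi *\<^sub>R v)" using x \<open>t = t0 + v\<close>
      by (simp add: algebra_simps)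
    ultimately show "x \<in> translate (xi *\<^sub>R v) (subst s xi P)" unfolding translate_def by force
  qed
  show "translate (xi *\<^sub>R v) (subst s xi P) \<subseteq> subst s xi (translate v P)"
  proof
    fix x assume "x \<in> translate (xi *\<^sub>R v) (subst s xi P)"
    then obtain l y where x: "x = (l, y + xi *\<^sub>R v)" "(l, y) \<in> subst s xi P"
      unfolding translate_def by auto
    then obtain i t u where y: "y = xi *\<^sub>R t + u" "(i, t) \<in> P" "(l, u) \<in> s i"
      unfolding subst_def by blast
    have "(i, t + v) \<in> translate v P" using y unfolding translate_def by force
    moreover have "x = (l, xi *\<^sub>R (t + v) + u)" using x y by (simp add: algebra_simps)
    ultimately show "x \<in> subst s xi (translate v P)" using y unfolding subst_def by blast
  qed
qed

lemma left_act_translate: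
  "\<exists>v'. left_act \<sigma> \<xi> a (translate v P) = translate v' (left_act \<sigma> \<xi> a P)"
proof (induction a)
  case Nil then show ?case by (auto simp: left_act_def)
next
  case (Cons j a)
  then obtain v' where "left_act \<sigma> \<xi> a (translate v P) = translate v' (left_act \<sigma> \<xi> a P)" by blast
  then show ?case by (auto simp: left_act_def subst_translate)
qed

lemma left_act_append: "left_act \<sigma> \<xi> (a @ b) P = left_act \<sigma> \<xi> a (left_act \<sigma> \<xi> b P)"
  by (simp add: left_act_def)

lemma right_act_append: "right_act \<sigma> \<xi> P (a @ b) = right_act \<sigma> \<xi> (right_act \<sigma> \<xi> P a) b"
  by (simp add: right_act_def left_act_append)

lemma translate_compose: "translate a (translate b Q) = translate (b + a) Q"
  unfolding translate_def image_comp by (intro image_cong refl) (auto simp: add.assoc)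

lemma translate_memI: "(i, t) \<in> X \<Longrightarrow> (i, t + v) \<in> translate v X"
  unfolding translate_def by force

lemma right_act_mono: "P \<subseteq> P' \<Longrightarrow> right_act \<sigma> \<xi> P a \<subseteq> right_act \<sigma> \<xi> P' a"
  unfolding right_act_def by (rule left_act_mono)

lemma translate_mono: "Q \<subseteq> Q' \<Longrightarrow> translate v Q \<subseteq> translate v Q'"
  unfolding translate_def by blast

lemma single_translate: "{(l, s)} = translate s {(l, 0)}"
  by (simp add: translate_def)

lemma nonempty_inv:
  assumes ms: "mixed_subst_system F n k \<sigma> \<xi>"
    and "set a \<subseteq> {..<k}" and "(l, s) \<in> P" "l < n" "F l \<noteq> {}"
  shows "\<exists>l' s'. (l', s') \<in> left_act \<sigma> \<xi> a P \<and> l' < n \<and> F l' \<noteq> {}"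
  using assms(2)
proof (induction a)
  case Nil then show ?case using assms by (auto simp: left_act_def)
next
  case (Cons j a)
  then obtain l' s' where h: "(l', s') \<in> left_act \<sigma> \<xi> a P" "l' < n" "F l' \<noteq> {}" by auto
  have "j < k" using Cons by auto
  then have sr: "subst_rule F n (\<sigma> j) (\<xi> j)" using ms unfolding mixed_subst_system_def by auto
  then have ip: "is_patch F n (\<sigma> j l')" and sp: "supp F (\<sigma> j l') = (\<lambda>x. \<xi> j *\<^sub>R x) ` F l'"
    using h unfolding subst_rule_def by auto
  then have "supp F (\<sigma> j l') \<noteq> {}" using h by auto
  then obtain x where x: "x \<in> \<sigma> j l'" "geom F x \<noteq> {}" unfolding supp_def by auto
  obtain l'' u where xe: "x = (l'', u)" by fastforce
  have "l'' < n" using ip x xe unfolding is_patch_def by auto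
  moreover have "F l'' \<noteq> {}" using x xe unfolding geom_def by auto
  moreover have "(l'', \<xi> j *\<^sub>R s' + u) \<in> subst (\<sigma> j) (\<xi> j) (left_act \<sigma> \<xi> a P)"
    using h(1) x(1) xe unfolding subst_def by blast
  moreover have "left_act \<sigma> \<xi> (j # a) P = subst (\<sigma> j) (\<xi> j) (left_act \<sigma> \<xi> a P)"
    by (simp add: left_act_def)
  ultimately show ?case by blast
qed

lemma prefix_split:
  assumes "\<forall>l<length a. w (p + l) = a ! l"
  shows "prefix_word w (p + length a) = prefix_word w p @ a"
proof -
  have e1: "[0..<p + length a] = [0..<p] @ [p..<p + length a]"
    by (rule upt_add_eq_append) simp
  have e2: "map w [p..<p + length a] = a"
  proof (rule nth_equalityI)
    show "length (map w [p..<p + length a]) = length a" by simp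
    fix i assume "i < length (map w [p..<p + length a])"
    then have i: "i < length a" by simp
    then have "map w [p..<p + length a] ! i = w (p + i)" by simp
    also have "\<dots> = a ! i" using assms i by blast
    finally show "map w [p..<p + length a] ! i = a ! i" .
  qed
  show ?thesis unfolding prefix_word_def e1 map_append e2 ..
qed

theorem lemma6p1:
  fixes F :: "nat \<Rightarrow> 'a::euclidean_space set"
    and n k :: nat
    and \<sigma> :: "nat \<Rightarrow> nat \<Rightarrow> (nat \<times> 'a) set"
    and \<xi> :: "nat \<Rightarrow> real"
    and w :: "nat \<Rightarrow> nat"
  assumes "mixed_subst_system F n k \<sigma> \<xi>"
    and "uniformly_primitive n k \<sigma> \<xi>"
    and "w \<in> Omega_tilde k"
  shows "Y_Omega F n k \<sigma> \<xi> = Y_w F n \<sigma> \<xi> w"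
proof
  have wO: "w \<in> Omega k" using assms(3) unfolding Omega_tilde_def by auto
  then show "Y_w F n \<sigma> \<xi> w \<subseteq> Y_Omega F n k \<sigma> \<xi>" unfolding Y_Omega_def by blast
  have "w 0 < k" using wO unfolding Omega_def by simp
  then have kpos: "0 < k" by simp
  obtain m0 where up: "\<forall>a. set a \<subseteq> {..<k} \<and> length a = m0 \<longrightarrow>
     (\<forall>i<n. \<forall>j<n. \<exists>t. (j, t) \<in> left_act \<sigma> \<xi> a {(i, 0)})"
    using assms(2) unfolding uniformly_primitive_def by (elim exE)
  show "Y_Omega F n k \<sigma> \<xi> \<subseteq> Y_w F n \<sigma> \<xi> w"
  proof
    fix T assume "T \<in> Y_Omega F n k \<sigma> \<xi>"
    then obtain w' where w': "w' \<in> Omega k" and TY: "T \<in> Y_w F n \<sigma> \<xi> w'"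
      unfolding Y_Omega_def by blast
    have til: "is_tiling F n T" using TY unfolding Y_w_def mem_Collect_eq by (rule conjunct1)
    have "(0::'a) \<in> supp F T" using til unfolding is_tiling_def by auto
    then obtain x where x: "x \<in> T" "0 \<in> geom F x" unfolding supp_def by auto
    have i0n: "fst x < n" using x til unfolding is_tiling_def by auto
    have i0F: "F (fst x) \<noteq> {}" using x unfolding geom_def by auto
    define i0 where "i0 = fst x"
    show "T \<in> Y_w F n \<sigma> \<xi> w"
      unfolding Y_w_def mem_Collect_eq
    proof (intro conjI allI impI til)
      fix P assume P: "finite P \<and> P \<subseteq> T"
      have TY': "\<forall>P. finite P \<and> P \<subseteq> T \<longrightarrow> (\<exists>R\<in>R_w n \<sigma> \<xi> w'. \<exists>Q v. Q \<subseteq> R \<and> P = translate v Q)"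
        using TY unfolding Y_w_def mem_Collect_eq by (rule conjunct2)
      obtain R Q v where R: "R \<in> R_w n \<sigma> \<xi> w'" and Q: "Q \<subseteq> R" "P = translate v Q"
        using TY'[rule_format, OF P] by (elim bexE exE conjE)
      then obtain i m where im: "i < n" "R = right_act \<sigma> \<xi> {(i, 0)} (prefix_word w' m)"
        unfolding R_w_def by blast
      define b where "b = replicate m0 (0::nat)"
      define a where "a = b @ prefix_word w' m"
      have wl: "set (prefix_word w' m) \<subseteq> {..<k}" using w' unfolding prefix_word_def Omega_def by auto
      have bl: "set b \<subseteq> {..<k}" using kpos unfolding b_def by auto
      have "set a \<subseteq> {..<k}" using wl bl unfolding a_def by auto
      moreover have "\<forall>a. set a \<subseteq> {..<k} \<longrightarrow> (\<exists>p. \<forall>l<length a. w (p + l) = a ! l)"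
        using assms(3) unfolding Omega_tilde_def by simp
      ultimately obtain p where p: "\<forall>l<length a. w (p + l) = a ! l"
        by blast
      have pw: "prefix_word w (p + length a) = prefix_word w p @ b @ prefix_word w' m"
        using prefix_split[OF p] unfolding a_def by simp
      have wpl: "set (rev (prefix_word w p)) \<subseteq> {..<k}" using wO unfolding prefix_word_def Omega_def by auto
      obtain l s where ls: "(l, s) \<in> right_act \<sigma> \<xi> {(i0, 0)} (prefix_word w p)" "l < n"
        using nonempty_inv[OF assms(1) wpl, of i0 0 "{(i0, 0)}"] i0n i0F
        unfolding right_act_def i0_def by auto
      have "length (rev b) = m0" "set (rev b) \<subseteq> {..<k}" using bl unfolding b_def by auto
      then obtain t where t: "(i, t) \<in> left_act \<sigma> \<xi> (rev b) {(l, 0)}"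
        using up[rule_format, of "rev b" l i] ls(2) im(1) by blast
      obtain v1 where v1: "left_act \<sigma> \<xi> (rev b) (translate s {(l, 0)}) = translate v1 (left_act \<sigma> \<xi> (rev b) {(l, 0)})"
        using left_act_translate by blast
      have "{(l, s)} \<subseteq> right_act \<sigma> \<xi> {(i0, 0)} (prefix_word w p)" using ls by auto
      then have m1: "right_act \<sigma> \<xi> {(l, s)} b \<subseteq> right_act \<sigma> \<xi> {(i0, 0)} (prefix_word w p @ b)"
        unfolding right_act_append by (rule right_act_mono)
      have "right_act \<sigma> \<xi> {(l, s)} b = translate v1 (left_act \<sigma> \<xi> (rev b) {(l, 0)})"
        unfolding right_act_def by (subst single_translate) (rule v1)
      then have "(i, t + v1) \<in> right_act \<sigma> \<xi> {(l, s)} b"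
        using translate_memI[OF t] by simp
      then have "{(i, t + v1)} \<subseteq> right_act \<sigma> \<xi> {(i0, 0)} (prefix_word w p @ b)"
        using m1 by blast
      then have sub0: "right_act \<sigma> \<xi> {(i, t + v1)} (prefix_word w' m)
          \<subseteq> right_act \<sigma> \<xi> (right_act \<sigma> \<xi> {(i0, 0)} (prefix_word w p @ b)) (prefix_word w' m)"
        by (rule right_act_mono)
      have pw2: "prefix_word w (p + length a) = (prefix_word w p @ b) @ prefix_word w' m"
        using pw by simp
      have sub: "right_act \<sigma> \<xi> {(i, t + v1)} (prefix_word w' m)
          \<subseteq> right_act \<sigma> \<xi> {(i0, 0)} (prefix_word w (p + length a))"
        using sub0 unfolding pw2 right_act_append .
      obtain v2 where v2': "left_act \<sigma> \<xi> (rev (prefix_word w' m)) (translate (t + v1) {(i, 0)})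
          = translate v2 (left_act \<sigma> \<xi> (rev (prefix_word w' m)) {(i, 0)})"
        using left_act_translate by blast
      have v2: "right_act \<sigma> \<xi> {(i, t + v1)} (prefix_word w' m) = translate v2 R"
        unfolding im(2) right_act_def by (subst single_translate) (rule v2')
      have "translate v2 Q \<subseteq> right_act \<sigma> \<xi> {(i0, 0)} (prefix_word w (p + length a))"
        using sub unfolding v2 by (rule subset_trans[OF translate_mono[OF Q(1)]])
      moreover have "P = translate (v - v2) (translate v2 Q)"
        using Q(2) by (simp add: translate_compose)
      moreover have "right_act \<sigma> \<xi> {(i0, 0)} (prefix_word w (p + length a)) \<in> R_w n \<sigma> \<xi> w"
        unfolding R_w_def using i0n unfolding i0_def[symmetric] by blast
      ultimately show "\<exists>R\<in>R_w n \<sigma> \<xi> w. \<exists>Q v. Q \<subseteq> R \<and> P = translate v Q"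
        by (intro bexI[of _ "right_act \<sigma> \<xi> {(i0, 0)} (prefix_word w (p + length a))"]
            exI[of _ "translate v2 Q"] exI[of _ "v - v2"] conjI)
    qed
  qed
qed

end
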